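(* Let $\theta\in[0,1)$, let $\psi_1,\psi_2:\mathbb{N}\to(0,\infty)$ with $\psi_2\le\psi_1$, $\psi_2$ decreasing, and $\lambda(\psi_2)=\tau_2\ge 2$. Fix $\epsilon\in(0,1)$. For $M>1$ set $c_M=M^{-\epsilon/100}$, and for primes $q$ with $M\le q<2M$ and integers $0\le r<q$ put \[x_{q,r}=\frac{r-\theta}{q}+\psi_1(q)-\tfrac{c_M}{2}\psi_2(q),\qquad \phi_{r,q}(x)=(c_M\psi_2(q))^{-1}\,\phi\big((c_M\psi_2(q))^{-1}(x-x_{q,r})\big),\] where $\phi$ is a fixed nonnegative, not identically zero, smooth function on $\mathbb{R}$ supported in $[-1/2,1/2]$ with $|\hat\phi(\xi)|\le C\exp(-|\xi|^{3/4})$ for all sufficiently large $|\xi|$. Let $g_M=\sum_{M\le q<2M,\ q\text{ prime}}\sum_{0\le r<q}\phi_{r,q}$ and $f_M=g_M/\hat g_M(0)$. Then there exist $M_0=M_0(\epsilon,\psi_1,\psi_2,\theta,\phi)$ and $C_\epsilon$ such that for all $M\ge M_0$ and all integers $s$: \begin{align*} \hat f_M(0)&=1,\\ \hat f_M(s)&=0 &&\text{if }1\le|s|<M,\\ |\hat f_M(s)|&\le C_\epsilon M^{-1+\epsilon} &&\text{if }M\le|s|\le M^{\tau_2(1+\epsilon/2)},\\ |\hat f_M(s)|&\le\exp\Big(-\Big|\frac{s}{M^{\tau_2}}\Big|^{1/2}\Big) &&\text{if }|s|\ge M^{\tau_2(1+\epsilon/2)}. \end{align*}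
   Context: $\lambda(\psi):=-\lim_{q\to\infty}\frac{\log\psi(q)}{\log q}$ (assumed to exist). Fourier transform on $\mathbb{R}$: $\hat f(\xi)=\int e^{-2\pi i x\xi}f(x)\,dx$. *)

theory Defs
  imports "HOL-Analysis.Analysis"
begin

definition fourier :: "(real \<Rightarrow> complex) \<Rightarrow> real \<Rightarrow> complex" where
  "fourier f \<xi> = (\<integral>x. exp (- (2 * pi * \<i> * complex_of_real (x * \<xi>))) * f x \<partial>lborel)"

definition smooth_fun :: "(real \<Rightarrow> real) \<Rightarrow> bool" where
  "smooth_fun f \<longleftrightarrow> (\<forall>k x. ((deriv ^^ k) f) differentiable (at x))"

definition cM :: "real \<Rightarrow> real \<Rightarrow> real" where
  "cM \<epsilon> M = M powr (- \<epsilon> / 100)"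

definition xqr :: "real \<Rightarrow> (nat \<Rightarrow> real) \<Rightarrow> (nat \<Rightarrow> real) \<Rightarrow> real \<Rightarrow> real \<Rightarrow> nat \<Rightarrow> nat \<Rightarrow> real" where
  "xqr \<theta> \<psi>1 \<psi>2 \<epsilon> M q r =
     (real r - \<theta>) / real q + \<psi>1 q - cM \<epsilon> M / 2 * \<psi>2 q"

definition phi_rq :: "(real \<Rightarrow> real) \<Rightarrow> real \<Rightarrow> (nat \<Rightarrow> real) \<Rightarrow> (nat \<Rightarrow> real) \<Rightarrow> real \<Rightarrow> real
    \<Rightarrow> nat \<Rightarrow> nat \<Rightarrow> real \<Rightarrow> real" where
  "phi_rq \<phi> \<theta> \<psi>1 \<psi>2 \<epsilon> M r q x =
     (cM \<epsilon> M * \<psi>2 q) powr (-1) *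
       \<phi> ((cM \<epsilon> M * \<psi>2 q) powr (-1) * (x - xqr \<theta> \<psi>1 \<psi>2 \<epsilon> M q r))"

definition gM :: "(real \<Rightarrow> real) \<Rightarrow> real \<Rightarrow> (nat \<Rightarrow> real) \<Rightarrow> (nat \<Rightarrow> real) \<Rightarrow> real \<Rightarrow> real
    \<Rightarrow> real \<Rightarrow> real" where
  "gM \<phi> \<theta> \<psi>1 \<psi>2 \<epsilon> M x =
     (\<Sum>q\<in>{q::nat. prime q \<and> M \<le> real q \<and> real q < 2 * M}.
        \<Sum>r<q. phi_rq \<phi> \<theta> \<psi>1 \<psi>2 \<epsilon> M r q x)"

definition fM :: "(real \<Rightarrow> real) \<Rightarrow> real \<Rightarrow> (nat \<Rightarrow> real) \<Rightarrow> (nat \<Rightarrow> real) \<Rightarrow> real \<Rightarrow> real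
    \<Rightarrow> real \<Rightarrow> complex" where
  "fM \<phi> \<theta> \<psi>1 \<psi>2 \<epsilon> M x =
     complex_of_real (gM \<phi> \<theta> \<psi>1 \<psi>2 \<epsilon> M x)
       / fourier (\<lambda>y. complex_of_real (gM \<phi> \<theta> \<psi>1 \<psi>2 \<epsilon> M y)) 0"

end

theory Submission
  imports Defs "HOL-Computational_Algebra.Primes" "HOL.Binomial_Plus" "HOL-Real_Asymp.Real_Asymp"
begin


lemma prod_primes_dvd_nat:
  fixes n :: nat
  assumes "finite S" "\<And>p. p \<in> S \<Longrightarrow> prime p \<and> p dvd n"
  shows "(\<Prod>p\<in>S. p) dvd n"
  using assms
proof (induction S rule: finite_induct)
  case empty then show ?case by simp
next
  case (insert x F)
  have IH: "(\<Prod>p\<in>F. p) dvd n" using insert by auto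
  have px: "prime x" "x dvd n" using insert.prems by auto
  have "\<not> x dvd (\<Prod>p\<in>F. p)"
  proof
    assume "x dvd (\<Prod>p\<in>F. p)"
    then obtain y where "y \<in> F" "x dvd y" using prime_dvd_prod_iff[OF insert.hyps(1) px(1)] by auto
    then have "x = y" using insert.prems primes_dvd_imp_eq[of x y] px by auto
    then show False using \<open>y \<in> F\<close> insert.hyps by auto
  qed
  then have "coprime x (\<Prod>p\<in>F. p)" using prime_imp_coprime px by blast
  then have "x * (\<Prod>p\<in>F. p) dvd n" using IH px divides_mult by blast
  then show ?case using insert.hyps by simp
qed

lemma div_Suc_ind: "Suc m div d = m div d + (if d dvd Suc m then 1 else 0)" for m d :: nat
  by (simp add: div_Suc dvd_eq_mod_eq_0)

lemma card_pow_dvd: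
  fixes p x K :: nat
  assumes "prime p" "0 < x" "x < p ^ K"
  shows "(\<Sum>i\<in>{1..K}. (if p ^ i dvd x then 1 else 0::nat)) = multiplicity p x"
proof -
  let ?v = "multiplicity p x"
  have "p ^ ?v dvd x" by (simp add: multiplicity_dvd)
  then have "p ^ ?v \<le> x" using assms(2) dvd_imp_le by blast
  then have "p ^ ?v < p ^ K" using assms by linarith
  then have vK: "?v < K" using power_less_imp_less_exp[of p] prime_gt_1_nat[OF assms(1)] by blast
  have "(\<Sum>i\<in>{1..K}. (if p ^ i dvd x then 1 else 0::nat)) = card {i\<in>{1..K}. p ^ i dvd x}"
    by (simp add: sum.If_cases) (intro arg_cong[where f=card], auto)
  also have "{i\<in>{1..K}. p ^ i dvd x} = {1..?v}"
  proof -
    have nu: "\<not> is_unit p" using assms(1) by (auto simp: not_prime_unit)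
    have pd: "p ^ i dvd x \<longleftrightarrow> i \<le> ?v" for i
      using power_dvd_iff_le_multiplicity[of x p i] nu assms(2) by simp
    show ?thesis using vK by (auto simp only: pd) auto
  qed
  finally show ?thesis by simp
qed

lemma legendre:
  fixes p K :: nat
  assumes "prime p"
  shows "m < p ^ K \<Longrightarrow> multiplicity p (fact m :: nat) = (\<Sum>i\<in>{1..K}. m div p ^ i)"
proof (induction m)
  case 0 then show ?case by simp
next
  case (Suc m)
  have "fact (Suc m) = (Suc m) * (fact m :: nat)" by simp
  then have "multiplicity p (fact (Suc m) :: nat) = multiplicity p (Suc m) + multiplicity p (fact m :: nat)"
    using assms by (simp only:) (rule prime_elem_multiplicity_mult_distrib, auto)
  also have "multiplicity p (fact m :: nat) = (\<Sum>i\<in>{1..K}. m div p ^ i)" using Suc by simp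
  also have "multiplicity p (Suc m) = (\<Sum>i\<in>{1..K}. (if p ^ i dvd Suc m then 1 else 0::nat))"
    using card_pow_dvd[OF assms, of "Suc m" K] Suc.prems by simp
  also have "\<dots> + (\<Sum>i\<in>{1..K}. m div p ^ i) = (\<Sum>i\<in>{1..K}. Suc m div p ^ i)"
    by (simp add: div_Suc_ind sum.distrib[symmetric] add.commute)
  finally show ?case .
qed

lemma div_double_le: "(2 * n) div d \<le> 2 * (n div d) + 1" for n d :: nat
proof (cases "d = 0")
  case False
  have "2 * n = d * (2 * (n div d)) + 2 * (n mod d)"
    using mult_div_mod_eq[of d n] by (metis add_mult_distrib2 mult.left_commute)
  moreover have "2 * (n mod d) < 2 * d" using False by simp
  ultimately have "2 * n < d * (2 * (n div d) + 2)" by (simp add: algebra_simps)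
  then have "(2*n) div d < 2 * (n div d) + 2"
    using False by (simp add: div_less_iff_less_mult mult.commute)
  then show ?thesis by simp
qed simp

lemma div_double_ge: "2 * (n div d) \<le> (2 * n) div d" for n d :: nat
proof (cases "d = 0")
  case False
  have "2 * n = d * (2 * (n div d)) + 2 * (n mod d)"
    using mult_div_mod_eq[of d n] by (metis add_mult_distrib2 mult.left_commute)
  then have "d * (2 * (n div d)) \<le> 2 * n" by linarith
  then show ?thesis using False by (metis div_le_mono div_mult_self1_is_m gr0I mult.commute)
qed simp

lemma binom_odd_le: "(2*k+1) choose k \<le> 4 ^ k"
proof -
  have "(\<Sum>i\<in>{k, Suc k}. (2*k+1) choose i) \<le> (\<Sum>i\<le>2*k+1. (2*k+1) choose i)"
    by (intro sum_mono2) auto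
  also have "\<dots> = 2 ^ (2*k+1)" by (rule choose_row_sum)
  also have "(\<Sum>i\<in>{k, Suc k}. (2*k+1) choose i) = ((2*k+1) choose k) + ((2*k+1) choose Suc k)"
    by simp
  also have "(2*k+1) choose Suc k = (2*k+1) choose k"
    using binomial_symmetric[of "Suc k" "2*k+1"] by simp
  finally have "2 * ((2*k+1) choose k) \<le> 2 * 4 ^ k"
    by (simp add: power_mult power_add)
  then show ?thesis by simp
qed

lemma primorial_le: "\<Prod>{p::nat. prime p \<and> p \<le> x} \<le> 4 ^ x"
proof (induction x rule: less_induct)
  case (less x)
  show ?case
  proof (cases "x \<le> 2")
    case True
    have e2: "{p::nat. prime p \<and> p \<le> 2} = {2}"
    proof (intro set_eqI iffI)
      fix p assume "p \<in> {p::nat. prime p \<and> p \<le> 2}"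
      then have "prime p" "p \<le> 2" by auto
      then show "p \<in> {2}" using prime_ge_2_nat[of p] by simp
    qed simp
    have e1: "{p::nat. prime p \<and> p \<le> x} = {}" if "x < 2"
      using that by (auto dest: prime_ge_2_nat)
    show ?thesis
    proof (cases "x = 2")
      case True then show ?thesis using e2 by simp
    next
      case False
      then have "x < 2" using \<open>x \<le> 2\<close> by simp
      then show ?thesis by (simp only: e1) simp
    qed
  next
    case False
    show ?thesis
    proof (cases "even x")
      case True
      have "{p::nat. prime p \<and> p \<le> x} = {p::nat. prime p \<and> p \<le> x - 1}"
      proof (intro Collect_cong iffI conjI)
        fix p assume h: "prime p \<and> p \<le> x"
        have "p \<noteq> x"
        proof
          assume "p = x"
          then have "prime x" using h by simp
          then show False using True \<open>\<not> x \<le> 2\<close> prime_odd_nat[of x] by simp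
        qed
        then show "p \<le> x - 1" using h by linarith
      qed auto
      then have "\<Prod>{p::nat. prime p \<and> p \<le> x} \<le> 4 ^ (x - 1)" using less[of "x-1"] False by simp
      also have "\<dots> \<le> 4 ^ x" by (intro power_increasing) auto
      finally show ?thesis .
    next
      case odd: False
      then obtain k where xk: "x = 2*k+1" using oddE by blast
      with False have k1: "k \<ge> 1" by simp
      define T where "T = {p::nat. prime p \<and> k+1 < p \<and> p \<le> 2*k+1}"
      have split: "{p::nat. prime p \<and> p \<le> x} = {p::nat. prime p \<and> p \<le> k+1} \<union> T"
        unfolding T_def xk by auto
      have disj: "{p::nat. prime p \<and> p \<le> k+1} \<inter> T = {}" unfolding T_def by auto
      have fin1: "finite {p::nat. prime p \<and> p \<le> k+1}" by simp
      have finT: "finite T" unfolding T_def by simp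
      have "\<Prod>T dvd ((2*k+1) choose k)"
      proof (rule prod_primes_dvd_nat[OF finT])
        fix p assume "p \<in> T"
        then have p: "prime p" "k+1 < p" "p \<le> 2*k+1" unfolding T_def by auto
        have eq: "fact k * fact (k+1) * ((2*k+1) choose k) = (fact (2*k+1) :: nat)"
          using binomial_fact_lemma[of k "2*k+1"] by (simp add: Suc_diff_le mult_2)
        have "p dvd (fact (2*k+1) :: nat)" using p prime_dvd_fact_iff by blast
        moreover have "\<not> p dvd (fact k :: nat)"
          by (subst prime_dvd_fact_iff[OF p(1)]) (use p in linarith)
        moreover have "\<not> p dvd (fact (k+1) :: nat)"
          by (subst prime_dvd_fact_iff[OF p(1)]) (use p in linarith)
        ultimately show "prime p \<and> p dvd ((2*k+1) choose k)"
          using p eq by (metis prime_dvd_mult_iff)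
      qed
      then have "\<Prod>T \<le> (2*k+1) choose k"
        by (rule dvd_imp_le) (simp add: zero_less_binomial_iff)
      also have "\<dots> \<le> 4 ^ k" by (rule binom_odd_le)
      finally have T4: "\<Prod>T \<le> 4 ^ k" .
      have "\<Prod>{p::nat. prime p \<and> p \<le> x} = \<Prod>{p::nat. prime p \<and> p \<le> k+1} * \<Prod>T"
        unfolding split by (rule prod.union_disjoint[OF fin1 finT disj])
      also have "\<dots> \<le> 4 ^ (k+1) * 4 ^ k"
        using less[of "k+1"] xk k1 T4 by (intro mult_mono) auto
      also have "\<dots> = 4 ^ x" unfolding xk by (simp add: power_add[symmetric])
      finally show ?thesis .
    qed
  qed
qed

lemma binom_mult:
  fixes p n K :: nat
  assumes p: "prime p" and K: "2*n < p^K"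
  shows "multiplicity p ((2*n) choose n) = (\<Sum>i\<in>{1..K}. (2*n) div p^i - 2*(n div p^i))"
proof -
  let ?B = "(2*n) choose n"
  have eq: "fact n * fact n * ?B = (fact (2*n) :: nat)"
    using binomial_fact_lemma[of n "2*n"] by simp
  have B0: "?B \<noteq> 0" by simp
  have "multiplicity p (fact (2*n) :: nat) = multiplicity p (fact n * fact n * ?B :: nat)"
    by (simp only: eq)
  also have "\<dots> = multiplicity p (fact n :: nat) + multiplicity p (fact n :: nat) + multiplicity p ?B"
    using p B0 by (simp add: prime_elem_multiplicity_mult_distrib)
  finally have m: "multiplicity p (fact (2*n) :: nat) = 2 * multiplicity p (fact n :: nat) + multiplicity p ?B"
    by simp
  have l2: "multiplicity p (fact (2*n) :: nat) = (\<Sum>i\<in>{1..K}. (2*n) div p ^ i)"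
    by (rule legendre[OF p K])
  have l1: "multiplicity p (fact n :: nat) = (\<Sum>i\<in>{1..K}. n div p ^ i)"
    by (rule legendre[OF p]) (use K in linarith)
  have "(\<Sum>i\<in>{1..K}. (2*n) div p^i - 2*(n div p^i)) = (\<Sum>i\<in>{1..K}. (2*n) div p^i) - (\<Sum>i\<in>{1..K}. 2*(n div p^i))"
    by (rule sum_subtractf_nat) (rule div_double_ge)
  also have "(\<Sum>i\<in>{1..K}. 2*(n div p^i)) = 2 * (\<Sum>i\<in>{1..K}. n div p^i)"
    by (simp add: sum_distrib_left)
  finally show ?thesis using m l1 l2 by simp
qed

lemma binom_pp:
  fixes p n :: nat
  assumes p: "prime p" and n: "n > 0"
  shows "p ^ multiplicity p ((2*n) choose n) \<le> 2*n"
proof (rule ccontr)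
  let ?v = "multiplicity p ((2*n) choose n)"
  define t where "t i = (2*n) div p^i - 2*(n div p^i)" for i
  assume "\<not> p ^ ?v \<le> 2*n"
  then have big: "2*n < p ^ ?v" by simp
  have p2: "p \<ge> 2" using prime_ge_2_nat[OF p] .
  have K: "2*n < p^(2*n)"
  proof -
    have "2*n < 2^(2*n)" by simp
    also have "\<dots> \<le> p^(2*n)" using p2 by (intro power_mono) auto
    finally show ?thesis .
  qed
  have v: "?v = (\<Sum>i\<in>{1..2*n}. t i)" unfolding t_def by (rule binom_mult[OF p K])
  have v1: "?v \<ge> 1"
  proof (rule ccontr)
    assume "\<not> ?v \<ge> 1" then have "?v = 0" by simp
    then show False using big n by simp
  qed
  have tz: "t i = 0" if "i \<ge> ?v" for i
  proof -
    have "p ^ ?v \<le> p ^ i" using that p2 by (intro power_increasing) auto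
    then have "2*n < p^i" using big by linarith
    then show ?thesis unfolding t_def by simp
  qed
  have t1: "t i \<le> 1" for i unfolding t_def using div_double_le[of n "p^i"] by simp
  have "(\<Sum>i\<in>{1..2*n}. t i) = (\<Sum>i\<in>{1..2*n}. if i < ?v then t i else 0)"
    by (intro sum.cong) (auto simp: tz)
  also have "\<dots> \<le> (\<Sum>i\<in>{1..2*n}. if i < ?v then 1 else 0)"
    using t1 by (intro sum_mono) (simp add: One_nat_def)
  also have "\<dots> = card {i\<in>{1..2*n}. i < ?v}"
    by (simp add: sum.If_cases) (intro arg_cong[where f=card], auto)
  also have "\<dots> \<le> card {1..<?v}"
    by (intro card_mono) auto
  also have "\<dots> = ?v - 1" by simp
  finally show False using v v1 by linarith
qed

lemma binom_mid:
  fixes p n :: nat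
  assumes p: "prime p" and h: "2*n < 3*p" "p \<le> n" "2*n < p*p"
  shows "multiplicity p ((2*n) choose n) = 0"
proof -
  have K: "2*n < p^2" using h by (simp add: power2_eq_square)
  have "multiplicity p ((2*n) choose n) = (\<Sum>i\<in>{1..2}. (2*n) div p^i - 2*(n div p^i))"
    by (rule binom_mult[OF p K])
  also have "\<dots> = ((2*n) div p - 2*(n div p)) + ((2*n) div p^2 - 2*(n div p^2))"
    by (simp add: numeral_2_eq_2)
  also have "(2*n) div p^2 = 0" using K by simp
  also have "n div p^2 = 0" using K by simp
  also have "(2*n) div p = 2" using h by (intro div_nat_eqI) auto
  also have "n div p = 1" using h by (intro div_nat_eqI) auto
  finally show ?thesis by simp
qed

lemma count_ineq:
  fixes n :: nat
  assumes n5: "n \<ge> 5"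
  shows "real n * ln 4 - ln (2*real n) \<le> sqrt (2*real n) * ln (2*real n) + (2*real n/3) * ln 4
           + real (card {p. prime p \<and> n < p \<and> p \<le> 2*n}) * ln (2*real n)"
proof -
  define B where "B = (2*n) choose n"
  define PF where "PF = prime_factors B"
  define v where "v p = multiplicity p B" for p
  have n0: "n > 0" using n5 by simp
  have B0: "B > 0" unfolding B_def by simp
  have finPF: "finite PF" unfolding PF_def by simp
  have eqf: "fact n * fact n * B = (fact (2*n) :: nat)"
    using binomial_fact_lemma[of n "2*n"] unfolding B_def by simp
  have PFp: "prime p" "p \<le> 2*n" "v p > 0" if "p \<in> PF" for p
  proof -
    show pp: "prime p" using that unfolding PF_def by auto
    have "p dvd B" using that unfolding PF_def by auto
    then have "p dvd (fact (2*n) :: nat)" using eqf by (metis dvd_mult_left dvd_trans dvd_triv_right)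
    then show "p \<le> 2*n" using prime_dvd_fact_iff[OF pp] by simp
    show "v p > 0" using that B0 unfolding PF_def v_def by (simp add: prime_factors_multiplicity)
  qed
  have Beq: "B = (\<Prod>p\<in>PF. p ^ v p)" unfolding PF_def v_def by (rule prime_factorization_nat[OF B0])
  define L where "L p = ln (real (p ^ v p))" for p
  have lnB: "ln (real B) = (\<Sum>p\<in>PF. L p)"
  proof -
    have "real B = (\<Prod>p\<in>PF. real (p ^ v p))" by (subst Beq) (simp only: of_nat_prod)
    then have "ln (real B) = ln (\<Prod>p\<in>PF. real (p ^ v p))" by simp
    also have "\<dots> = (\<Sum>p\<in>PF. ln (real (p ^ v p)))"
      by (rule ln_prod) (use finPF PFp prime_gt_0_nat in auto)
    finally show ?thesis unfolding L_def .
  qed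
  define K where "K = card {p. prime p \<and> n < p \<and> p \<le> 2*n}"
  define h where "h p = (if p*p \<le> 2*n then ln (2*real n) else 0) + (if \<not> p*p \<le> 2*n \<and> p \<le> n then ln (real p) else 0)
                          + (if n < p then ln (2*real n) else 0)" for p
  have Lh: "L p \<le> h p" if "p \<in> PF" for p
  proof -
    have pp: "prime p" using PFp that by auto
    have p1: "p \<ge> 1" using prime_ge_1_nat[OF pp] .
    have pv: "p ^ v p \<le> 2*n" unfolding v_def B_def by (rule binom_pp[OF pp n0])
    have L2n: "L p \<le> ln (2*real n)" unfolding L_def
      using pv p1 n0 by (subst ln_le_cancel_iff) (auto simp del: of_nat_power simp: of_nat_le_iff[symmetric])
    have L0: "L p \<ge> 0" unfolding L_def using p1 by simp
    show ?thesis
    proof (cases "p*p \<le> 2*n")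
      case True
      have "\<not> n < p"
      proof
        assume "n < p"
        then have "(n+1)*(n+1) \<le> p*p" by (intro mult_le_mono) auto
        moreover have "(n+1)*(n+1) = n*n + 2*n + 1" by (simp add: algebra_simps)
        ultimately show False using True by linarith
      qed
      then show ?thesis using True L2n unfolding h_def by simp
    next
      case False
      then have v1: "v p \<le> 1"
      proof -
        have "p ^ v p < p ^ 2" using pv False by (simp add: power2_eq_square)
        then have "v p < 2" using power_less_imp_less_exp[of p] prime_gt_1_nat[OF pp] by blast
        then show ?thesis by simp
      qed
      then have "L p \<le> ln (real p)" unfolding L_def
        using PFp[OF that] by (cases "v p") auto
      then show ?thesis using False L2n unfolding h_def by auto
    qed
  qed
  have ln2n: "ln (2*real n) \<ge> 0" using n0 by simp
  define A1 where "A1 = {p\<in>PF. p*p \<le> 2*n}"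
  define A2 where "A2 = {p\<in>PF. \<not> p*p \<le> 2*n \<and> p \<le> n}"
  define A3 where "A3 = {p\<in>PF. n < p}"
  have "(\<Sum>p\<in>PF. L p) \<le> (\<Sum>p\<in>PF. h p)" by (rule sum_mono) (rule Lh)
  also have "\<dots> = card A1 * ln (2*real n) + (\<Sum>p\<in>A2. ln (real p)) + card A3 * ln (2*real n)"
    unfolding h_def sum.distrib A1_def A2_def A3_def
    by (simp add: sum.inter_filter[OF finPF, symmetric])
  also have "card A1 * ln (2*real n) \<le> sqrt (2*real n) * ln (2*real n)"
  proof (rule mult_right_mono[OF _ ln2n])
    define m where "m = nat \<lfloor>sqrt (2*real n)\<rfloor>"
    have "A1 \<subseteq> {1..m}"
    proof
      fix p assume "p \<in> A1"
      then have pp: "prime p" "p*p \<le> 2*n" unfolding A1_def using PFp by auto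
      have "real p = sqrt (real (p*p))" by simp
      also have "\<dots> \<le> sqrt (2*real n)" 
      proof -
        have "real (p*p) \<le> real (2*n)" using pp(2) by (simp only: of_nat_le_iff)
        then have h: "real (p*p) \<le> 2*real n" by simp
        show ?thesis by (rule real_sqrt_le_mono[OF h])
      qed
      finally have "real p \<le> sqrt (2*real n)" .
      then have "p \<le> m" unfolding m_def by (simp add: le_nat_floor)
      then show "p \<in> {1..m}" using prime_ge_1_nat[OF pp(1)] by simp
    qed
    then have "card A1 \<le> m" using card_mono[of "{1..m}" A1] by simp
    then have "real (card A1) \<le> real m" by simp
    also have "real m \<le> sqrt (2*real n)" unfolding m_def by simp
    finally show "real (card A1) \<le> sqrt (2*real n)" .
  qed
  also have "(\<Sum>p\<in>A2. ln (real p)) \<le> (2*real n/3) * ln 4"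
  proof -
    define Q where "Q = {p::nat. prime p \<and> p \<le> (2*n) div 3}"
    have finQ: "finite Q" unfolding Q_def by simp
    have "A2 \<subseteq> Q"
    proof
      fix p assume "p \<in> A2"
      then have pp: "prime p" "\<not> p*p \<le> 2*n" "p \<le> n" "v p > 0" unfolding A2_def using PFp by auto
      have "\<not> 2*n < 3*p"
      proof
        assume "2*n < 3*p"
        then have "multiplicity p ((2*n) choose n) = 0" using pp by (intro binom_mid) auto
        then show False using pp(4) unfolding v_def B_def by simp
      qed
      then show "p \<in> Q" unfolding Q_def using pp by auto
    qed
    then have "(\<Sum>p\<in>A2. ln (real p)) \<le> (\<Sum>p\<in>Q. ln (real p))"
      by (intro sum_mono2[OF finQ]) (auto simp: Q_def dest: prime_ge_1_nat)
    also have "\<dots> = ln (real (\<Prod>Q))"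
      by (subst ln_prod[symmetric]) (auto simp: finQ Q_def prime_gt_0_nat)
    also have "\<dots> \<le> ln (4 ^ ((2*n) div 3))"
    proof -
      have "\<Prod>Q \<le> 4 ^ ((2*n) div 3)" unfolding Q_def by (rule primorial_le)
      then have "real (\<Prod>Q) \<le> real (4 ^ ((2*n) div 3))" by (simp only: of_nat_le_iff)
      then have "real (\<Prod>Q) \<le> 4 ^ ((2*n) div 3)" by simp
      moreover have "real (\<Prod>Q) > 0" unfolding of_nat_prod
        by (rule prod_pos) (auto simp: Q_def prime_gt_0_nat)
      ultimately show ?thesis by simp
    qed
    also have "\<dots> = real ((2*n) div 3) * ln 4" by (simp add: ln_realpow)
    also have "\<dots> \<le> (2*real n/3) * ln 4"
      by (intro mult_right_mono) (simp_all add: real_of_nat_div)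
    finally show ?thesis .
  qed
  also have "card A3 * ln (2*real n) \<le> real K * ln (2*real n)"
  proof (rule mult_right_mono[OF _ ln2n])
    have "A3 \<subseteq> {p. prime p \<and> n < p \<and> p \<le> 2*n}" unfolding A3_def using PFp by auto
    then show "real (card A3) \<le> real K" unfolding K_def by (simp add: card_mono)
  qed
  finally have upper: "ln (real B) \<le> sqrt (2*real n) * ln (2*real n) + (2*real n/3) * ln 4 + real K * ln (2*real n)"
    using lnB by simp
  have "4^n / (2*real n) \<le> real B" unfolding B_def by (rule central_binomial_lower_bound[OF n0])
  then have "ln (4^n / (2*real n)) \<le> ln (real B)" using n0 B0 by (subst ln_le_cancel_iff) auto
  moreover have "ln (4^n / (2*real n)) = real n * ln 4 - ln (2*real n)" using n0 by (simp add: ln_div ln_realpow)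
  ultimately show ?thesis using upper unfolding K_def by simp
qed

lemma primes_many:
  "\<exists>n0. \<forall>n\<ge>n0. real n / (4 * ln (2*real n)) + 2 \<le> real (card {p. prime p \<and> n < p \<and> p \<le> 2*n})"
proof -
  have ev: "eventually (\<lambda>x::real. x/(4*ln(2*x)) + 3 + sqrt(2*x) \<le> x/(3*ln(2*x))) at_top"
    by real_asymp
  then obtain X where X: "\<And>x. x \<ge> X \<Longrightarrow> x/(4*ln(2*x)) + 3 + sqrt(2*x) \<le> x/(3*ln(2*x))"
    by (auto simp: eventually_at_top_linorder)
  have ln4: "ln (4::real) \<ge> 1"
  proof -
    have "exp 1 \<le> (4::real)" using exp_le by simp
    then have "ln (exp 1) \<le> ln (4::real)" by (subst ln_le_cancel_iff) auto
    then show ?thesis by simp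
  qed
  show ?thesis
  proof (intro exI allI impI)
    fix n :: nat assume n: "n \<ge> max 5 (nat \<lceil>X\<rceil>)"
    define K where "K = real (card {p. prime p \<and> n < p \<and> p \<le> 2*n})"
    have n5: "n \<ge> 5" using n by simp
    have nX: "real n \<ge> X" using n by linarith
    have l0: "ln (2*real n) > 0" using n5 by simp
    have ci: "real n * ln 4 - ln (2*real n) \<le> sqrt (2*real n) * ln (2*real n) + (2*real n/3) * ln 4 + K * ln (2*real n)"
      unfolding K_def by (rule count_ineq[OF n5])
    have "real n / 3 * 1 \<le> (real n / 3) * ln 4" using ln4 by (intro mult_left_mono) auto
    also have "\<dots> \<le> (K + 1 + sqrt (2*real n)) * ln (2*real n)" using ci by (simp add: algebra_simps)
    finally have "real n / 3 / ln (2*real n) \<le> K + 1 + sqrt (2*real n)"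
      using l0 by (simp add: divide_le_eq)
    then have "real n / (3 * ln (2*real n)) \<le> K + 1 + sqrt (2*real n)" by simp
    with X[OF nX] show "real n / (4 * ln (2*real n)) + 2 \<le> K" by linarith
  qed
qed



lemma smooth_cont: "smooth_fun f \<Longrightarrow> continuous_on UNIV f"
proof -
  assume "smooth_fun f"
  then have "f differentiable (at x)" for x
    unfolding smooth_fun_def by (metis funpow_0)
  then have "isCont f x" for x by (rule differentiable_imp_continuous_within)
  then show ?thesis by (simp add: continuous_at_imp_continuous_on)
qed

lemma supp_integrable:
  fixes f :: "real \<Rightarrow> real"
  assumes c: "continuous_on UNIV f" and s: "\<And>x. \<bar>x\<bar> > 1/2 \<Longrightarrow> f x = 0"
  shows "integrable lborel f"
proof -
  have "integrable lborel (\<lambda>x. indicator {-1/2..1/2} x *\<^sub>R f x)"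
    by (rule borel_integrable_compact) (auto intro: continuous_on_subset[OF c])
  also have "(\<lambda>x. indicator {-1/2..1/2} x *\<^sub>R f x) = f"
  proof
    fix x show "indicator {-1/2..1/2} x *\<^sub>R f x = f x"
      using s[of x] by (cases "x \<in> {-1/2..1/2}") (auto simp: abs_if split: if_splits)
  qed
  finally show ?thesis .
qed

lemma pos_integral:
  fixes f :: "real \<Rightarrow> real"
  assumes c: "continuous_on UNIV f" and i: "integrable lborel f" and nn: "\<And>x. f x \<ge> 0"
    and ne: "\<exists>x. f x \<noteq> 0"
  shows "integral\<^sup>L lborel f > 0"
proof -
  obtain x0 where "f x0 \<noteq> 0" using ne by blast
  then have fx0: "f x0 > 0" using nn[of x0] by simp
  have "isCont f x0" using c by (simp add: continuous_on_eq_continuous_at)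
  then obtain d where d: "d > 0" "\<And>y. dist y x0 < d \<Longrightarrow> dist (f y) (f x0) < f x0 / 2"
    using fx0 unfolding continuous_at_eps_delta by (metis half_gt_zero)
  define S where "S = {x0 - d/2..x0 + d/2}"
  have lower: "indicator S x * (f x0 / 2) \<le> f x" for x
  proof (cases "x \<in> S")
    case True
    then have "dist x x0 < d" unfolding S_def dist_real_def using d by auto
    then have "dist (f x) (f x0) < f x0 / 2" using d by blast
    then have "\<bar>f x - f x0\<bar> < f x0 / 2" by (simp add: dist_real_def)
    then have "f x0/2 < f x" by (simp only: abs_less_iff) linarith
    then show ?thesis using True by simp
  qed (simp add: nn)
  have int1: "integrable lborel (\<lambda>x. indicator S x * (f x0 / 2))"
    unfolding S_def using d by (intro integrable_mult_left) (simp add: integrable_indicator_iff emeasure_lborel_Icc_eq)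
  have "integral\<^sup>L lborel (\<lambda>x. indicator S x * (f x0 / 2)) = d * (f x0 / 2)"
    unfolding S_def using d by (simp add: integral_indicator)
  also have "\<dots> > 0" using d fx0 by simp
  moreover have "integral\<^sup>L lborel (\<lambda>x. indicator S x * (f x0 / 2)) \<le> integral\<^sup>L lborel f"
    by (rule integral_mono[OF int1 i]) (rule lower)
  ultimately show ?thesis by linarith
qed

lemma norm_expi: "norm (exp (- (2 * pi * \<i> * complex_of_real t))) = 1"
  by (simp add: norm_exp_eq_Re)

lemma fourier_int:
  fixes \<phi> :: "real \<Rightarrow> real"
  assumes c: "continuous_on UNIV \<phi>" and i: "integrable lborel \<phi>" and a: "a > 0"
  shows "integrable lborel (\<lambda>x. exp (- (2 * pi * \<i> * complex_of_real (x * \<xi>))) *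
             complex_of_real (a powr -1 * \<phi> (a powr -1 * (x - x0))))"
proof (rule Bochner_Integration.integrable_bound[where f = "\<lambda>x. a powr -1 * \<phi> (a powr -1 * (x - x0))"])
  have "integrable lborel (\<lambda>x. \<phi> (- (a powr -1 * x0) + a powr -1 * x))"
    using a by (intro lborel_integrable_real_affine[OF i]) simp
  moreover have "(\<lambda>x. \<phi> (- (a powr -1 * x0) + a powr -1 * x)) = (\<lambda>x. \<phi> (a powr -1 * (x - x0)))"
    by (rule ext) (simp only: right_diff_distrib, simp)
  ultimately have "integrable lborel (\<lambda>x. \<phi> (a powr -1 * (x - x0)))"
    by simp
  then show "integrable lborel (\<lambda>x. a powr -1 * \<phi> (a powr -1 * (x - x0)))"
    by (rule integrable_mult_right)
  have "continuous_on UNIV (\<lambda>x. exp (- (2 * pi * \<i> * complex_of_real (x * \<xi>))) *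
             complex_of_real (a powr -1 * \<phi> (a powr -1 * (x - x0))))"
    by (intro continuous_intros continuous_on_compose2[OF c]) auto
  then show "(\<lambda>x. exp (- (2 * pi * \<i> * complex_of_real (x * \<xi>))) *
             complex_of_real (a powr -1 * \<phi> (a powr -1 * (x - x0)))) \<in> borel_measurable lborel"
    by (simp add: borel_measurable_continuous_onI)
  show "AE x in lborel. norm (exp (- (2 * pi * \<i> * complex_of_real (x * \<xi>))) *
             complex_of_real (a powr -1 * \<phi> (a powr -1 * (x - x0))))
          \<le> norm (a powr -1 * \<phi> (a powr -1 * (x - x0)))"
  proof (rule AE_I2)
    fix x
    show "norm (exp (- (2 * pi * \<i> * complex_of_real (x * \<xi>))) *
             complex_of_real (a powr -1 * \<phi> (a powr -1 * (x - x0))))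
          \<le> norm (a powr -1 * \<phi> (a powr -1 * (x - x0)))"
      by (simp only: norm_mult norm_expi norm_of_real) simp
  qed
qed

lemma fourier_scaled:
  fixes \<phi> :: "real \<Rightarrow> real"
  assumes a: "a > 0"
  shows "fourier (\<lambda>x. complex_of_real (a powr -1 * \<phi> (a powr -1 * (x - x0)))) \<xi> =
         exp (- (2 * pi * \<i> * complex_of_real (x0 * \<xi>))) * fourier (\<lambda>x. complex_of_real (\<phi> x)) (a * \<xi>)"
proof -
  let ?f = "\<lambda>x. exp (- (2 * pi * \<i> * complex_of_real (x * \<xi>))) *
             complex_of_real (a powr -1 * \<phi> (a powr -1 * (x - x0)))"
  have "integral\<^sup>L lborel ?f = \<bar>a\<bar> *\<^sub>R integral\<^sup>L lborel (\<lambda>y. ?f (x0 + a * y))"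
    using a by (intro lborel_integral_real_affine) simp
  also have "(\<lambda>y. ?f (x0 + a * y)) = (\<lambda>y. complex_of_real (a powr -1) * (exp (- (2 * pi * \<i> * complex_of_real (x0 * \<xi>))) *
        (exp (- (2 * pi * \<i> * complex_of_real (y * (a * \<xi>)))) * complex_of_real (\<phi> y))))"
  proof
    fix y
    have e: "a powr -1 * (x0 + a * y - x0) = y" using a by (simp add: powr_minus field_simps)
    have "exp (- (2 * pi * \<i> * complex_of_real ((x0 + a * y) * \<xi>))) =
          exp (- (2 * pi * \<i> * complex_of_real (x0 * \<xi>))) * exp (- (2 * pi * \<i> * complex_of_real (y * (a * \<xi>))))"
      by (simp add: exp_add[symmetric] algebra_simps)
    then show "?f (x0 + a * y) = complex_of_real (a powr -1) * (exp (- (2 * pi * \<i> * complex_of_real (x0 * \<xi>))) *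
        (exp (- (2 * pi * \<i> * complex_of_real (y * (a * \<xi>)))) * complex_of_real (\<phi> y)))"
      by (simp only: e of_real_mult) (simp add: algebra_simps)
  qed
  also have "integral\<^sup>L lborel \<dots> = complex_of_real (a powr -1) * (exp (- (2 * pi * \<i> * complex_of_real (x0 * \<xi>))) *
        fourier (\<lambda>x. complex_of_real (\<phi> x)) (a * \<xi>))"
    unfolding fourier_def by simp
  finally show ?thesis unfolding fourier_def using a
    by (simp add: scaleR_conv_of_real powr_minus field_simps)
qed

lemma fourier_phi_rq:
  assumes a: "cM \<epsilon> M * \<psi>2 q > 0"
  shows "fourier (\<lambda>x. complex_of_real (phi_rq \<phi> \<theta> \<psi>1 \<psi>2 \<epsilon> M r q x)) \<xi> =
     exp (- (2 * pi * \<i> * complex_of_real (xqr \<theta> \<psi>1 \<psi>2 \<epsilon> M q r * \<xi>))) *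
     fourier (\<lambda>x. complex_of_real (\<phi> x)) (cM \<epsilon> M * \<psi>2 q * \<xi>)"
  unfolding phi_rq_def by (rule fourier_scaled[OF a])

lemma fourier_gM:
  assumes c: "continuous_on UNIV \<phi>" and i: "integrable lborel \<phi>"
    and a: "\<And>q. cM \<epsilon> M * \<psi>2 q > 0"
  shows "fourier (\<lambda>y. complex_of_real (gM \<phi> \<theta> \<psi>1 \<psi>2 \<epsilon> M y)) \<xi> =
    (\<Sum>q\<in>{q::nat. prime q \<and> M \<le> real q \<and> real q < 2*M}. \<Sum>r<q.
       exp (- (2 * pi * \<i> * complex_of_real (xqr \<theta> \<psi>1 \<psi>2 \<epsilon> M q r * \<xi>))) *
       fourier (\<lambda>x. complex_of_real (\<phi> x)) (cM \<epsilon> M * \<psi>2 q * \<xi>))"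
proof -
  let ?P = "{q::nat. prime q \<and> M \<le> real q \<and> real q < 2*M}"
  let ?E = "\<lambda>x. exp (- (2 * pi * \<i> * complex_of_real (x * \<xi>)))"
  let ?h = "\<lambda>q r x. ?E x * complex_of_real (phi_rq \<phi> \<theta> \<psi>1 \<psi>2 \<epsilon> M r q x)"
  have int: "integrable lborel (?h q r)" for q r
    unfolding phi_rq_def by (rule fourier_int[OF c i a])
  have "fourier (\<lambda>y. complex_of_real (gM \<phi> \<theta> \<psi>1 \<psi>2 \<epsilon> M y)) \<xi> =
        integral\<^sup>L lborel (\<lambda>x. \<Sum>q\<in>?P. \<Sum>r<q. ?h q r x)"
    unfolding fourier_def gM_def by (simp add: sum_distrib_left)
  also have "\<dots> = (\<Sum>q\<in>?P. integral\<^sup>L lborel (\<lambda>x. \<Sum>r<q. ?h q r x))"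
    by (rule Bochner_Integration.integral_sum) (intro Bochner_Integration.integrable_sum int)
  also have "\<dots> = (\<Sum>q\<in>?P. \<Sum>r<q. integral\<^sup>L lborel (?h q r))"
    by (intro sum.cong refl Bochner_Integration.integral_sum int)
  also have "\<dots> = (\<Sum>q\<in>?P. \<Sum>r<q.
       exp (- (2 * pi * \<i> * complex_of_real (xqr \<theta> \<psi>1 \<psi>2 \<epsilon> M q r * \<xi>))) *
       fourier (\<lambda>x. complex_of_real (\<phi> x)) (cM \<epsilon> M * \<psi>2 q * \<xi>))"
    by (intro sum.cong refl) (subst fourier_phi_rq[OF a, symmetric], simp only: fourier_def)
  finally show ?thesis .
qed

lemma fourier_fM:
  "fourier (fM \<phi> \<theta> \<psi>1 \<psi>2 \<epsilon> M) \<xi> =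
     fourier (\<lambda>y. complex_of_real (gM \<phi> \<theta> \<psi>1 \<psi>2 \<epsilon> M y)) \<xi> /
     fourier (\<lambda>y. complex_of_real (gM \<phi> \<theta> \<psi>1 \<psi>2 \<epsilon> M y)) 0"
  unfolding fM_def
  by (subst (1) fourier_def) (simp only: times_divide_eq_right integral_divide_zero fourier_def)

lemma charsum_norm:
  "norm (\<Sum>r<q. exp (- (2 * pi * \<i> * complex_of_real (X r)))) \<le> real q"
proof -
  have "norm (\<Sum>r<q. exp (- (2 * pi * \<i> * complex_of_real (X r)))) \<le> (\<Sum>r<q. norm (exp (- (2 * pi * \<i> * complex_of_real (X r)))))"
    by (rule norm_sum)
  also have "\<dots> = real q" by (simp only: norm_expi) simp
  finally show ?thesis .
qed

lemma charsum_zero: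
  fixes s :: int and q :: nat
  assumes q: "q > 0" and nd: "\<not> int q dvd s"
  shows "(\<Sum>r<q. exp (- (2 * pi * \<i> * complex_of_real (xqr \<theta> \<psi>1 \<psi>2 \<epsilon> M q r * real_of_int s)))) = 0"
proof -
  define b where "b = (- \<theta> / real q + \<psi>1 q - cM \<epsilon> M / 2 * \<psi>2 q) * real_of_int s"
  define t where "t = real_of_int s / real q"
  define w where "w = exp (- (2 * pi * \<i> * complex_of_real t))"
  have tm: "exp (- (2 * pi * \<i> * complex_of_real (xqr \<theta> \<psi>1 \<psi>2 \<epsilon> M q r * real_of_int s))) =
        exp (- (2 * pi * \<i> * complex_of_real b)) * w ^ r" for r
  proof -
    have "xqr \<theta> \<psi>1 \<psi>2 \<epsilon> M q r * real_of_int s = real r * t + b"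
      unfolding xqr_def b_def t_def using q by (simp add: field_simps)
    then have "exp (- (2 * pi * \<i> * complex_of_real (xqr \<theta> \<psi>1 \<psi>2 \<epsilon> M q r * real_of_int s))) =
        exp (- (2 * pi * \<i> * complex_of_real b) + of_nat r * (- (2 * pi * \<i> * complex_of_real t)))"
      by (simp add: algebra_simps)
    also have "\<dots> = exp (- (2 * pi * \<i> * complex_of_real b)) * w ^ r"
      unfolding w_def by (simp only: exp_add exp_of_nat_mult)
    finally show ?thesis .
  qed
  have wq: "w ^ q = 1"
  proof -
    have "w ^ q = exp (of_nat q * (- (2 * pi * \<i> * complex_of_real t)))"
      unfolding w_def by (simp only: exp_of_nat_mult)
    also have "of_nat q * (- (2 * pi * \<i> * complex_of_real t)) = - (2 * pi * \<i> * complex_of_int s)"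
      unfolding t_def using q by (simp add: field_simps)
    also have "exp \<dots> = 1"
    proof -
      have "exp (- (2 * pi * \<i> * complex_of_int s)) = exp (\<i> * (complex_of_int (- s) * (complex_of_real pi * 2)))"
        by (simp add: algebra_simps)
      also have "\<dots> = 1" by (rule exp_2pi_1_int)
      finally show ?thesis .
    qed
    finally show ?thesis .
  qed
  have w1: "w \<noteq> 1"
  proof
    assume "w = 1"
    then obtain n :: int where n: "Im (- (2 * pi * \<i> * complex_of_real t)) = of_int (2 * n) * pi"
      unfolding w_def exp_eq_1 by blast
    then have "- (2 * pi * t) = 2 * real_of_int n * pi" by simp
    then have "pi * (t + real_of_int n) = 0" by (simp add: algebra_simps)
    then have "t = - real_of_int n" using pi_gt_zero by simp
    then have "real_of_int s = - real_of_int n * real q" unfolding t_def using q by (simp add: field_simps)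
    then have "s = (- n) * int q" by (metis of_int_eq_iff of_int_minus of_int_mult of_int_of_nat_eq)
    then show False using nd by simp
  qed
  have "(\<Sum>r<q. exp (- (2 * pi * \<i> * complex_of_real (xqr \<theta> \<psi>1 \<psi>2 \<epsilon> M q r * real_of_int s)))) =
        exp (- (2 * pi * \<i> * complex_of_real b)) * (\<Sum>r<q. w ^ r)"
    by (simp only: tm sum_distrib_left)
  also have "(\<Sum>r<q. w ^ r) = 0" using w1 wq by (simp add: sum_gp_strict)
  finally show ?thesis by simp
qed

lemma Phi_bound:
  fixes \<phi> :: "real \<Rightarrow> real"
  assumes nn: "\<And>x. \<phi> x \<ge> 0"
  shows "norm (fourier (\<lambda>x. complex_of_real (\<phi> x)) \<xi>) \<le> integral\<^sup>L lborel \<phi>"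
proof -
  have "norm (fourier (\<lambda>x. complex_of_real (\<phi> x)) \<xi>) \<le>
        integral\<^sup>L lborel (\<lambda>x. norm (exp (- (2 * pi * \<i> * complex_of_real (x * \<xi>))) * complex_of_real (\<phi> x)))"
    unfolding fourier_def by (rule integral_norm_bound)
  also have "(\<lambda>x. norm (exp (- (2 * pi * \<i> * complex_of_real (x * \<xi>))) * complex_of_real (\<phi> x))) = \<phi>"
  proof
    fix x show "norm (exp (- (2 * pi * \<i> * complex_of_real (x * \<xi>))) * complex_of_real (\<phi> x)) = \<phi> x"
      using nn[of x] by (simp only: norm_mult norm_expi norm_of_real mult_1 abs_of_nonneg)
  qed
  finally show ?thesis .
qed

lemma Phi0: "fourier (\<lambda>x. complex_of_real (\<phi> x)) 0 = complex_of_real (integral\<^sup>L lborel \<phi>)"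
  unfolding fourier_def by simp

lemma asymp_aux:
  fixes K I C R :: real
  assumes K: "K > 0" and I: "I > 0"
  shows "\<exists>U0. \<forall>u\<ge>U0. R \<le> K * u powr (49/50) \<and>
           C * exp (- ((K * u powr (49/50)) powr (3/4))) \<le> I * exp (- (u powr (1/2)))"
proof -
  define K' where "K' = K powr (3/4)"
  have K': "K' > 0" unfolding K'_def using K by simp
  have t: "((\<lambda>u::real. exp (u powr (1/2) - K' * u powr (147/200))) \<longlongrightarrow> 0) at_top"
    using K' by real_asymp
  have e1: "eventually (\<lambda>u. exp (u powr (1/2) - K' * u powr (147/200)) < I / (\<bar>C\<bar> + 1)) at_top"
    using t I by (intro order_tendstoD) auto
  have f: "filterlim (\<lambda>u::real. K * u powr (49/50)) at_top at_top" using K by real_asymp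
  have e2: "eventually (\<lambda>u. R \<le> K * u powr (49/50)) at_top"
    using f by (simp add: filterlim_at_top)
  have e3: "eventually (\<lambda>u::real. u > 0) at_top" by (rule eventually_gt_at_top)
  have "eventually (\<lambda>u. R \<le> K * u powr (49/50) \<and>
           C * exp (- ((K * u powr (49/50)) powr (3/4))) \<le> I * exp (- (u powr (1/2)))) at_top"
    using e1 e2 e3
  proof eventually_elim
    case (elim u)
    have "(K * u powr (49/50)) powr (3/4) = K' * u powr (147/200)"
      unfolding K'_def using K elim by (simp add: powr_mult powr_powr)
    then have "C * exp (- ((K * u powr (49/50)) powr (3/4))) =
               C * exp (u powr (1/2) - K' * u powr (147/200)) * exp (- (u powr (1/2)))"
      by (simp add: exp_add[symmetric])
    also have "\<dots> \<le> \<bar>C\<bar> * (I / (\<bar>C\<bar> + 1)) * exp (- (u powr (1/2)))"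
    proof (intro mult_right_mono)
      have "C * exp (u powr (1/2) - K' * u powr (147/200)) \<le> \<bar>C\<bar> * exp (u powr (1/2) - K' * u powr (147/200))"
        by (intro mult_right_mono) auto
      also have "\<dots> \<le> \<bar>C\<bar> * (I / (\<bar>C\<bar> + 1))"
        using elim by (intro mult_left_mono) auto
      finally show "C * exp (u powr (1/2) - K' * u powr (147/200)) \<le> \<bar>C\<bar> * (I / (\<bar>C\<bar> + 1))" .
    qed auto
    also have "\<bar>C\<bar> * (I / (\<bar>C\<bar> + 1)) \<le> I"
      using I by (simp add: field_simps)
    then have "\<bar>C\<bar> * (I / (\<bar>C\<bar> + 1)) * exp (- (u powr (1/2))) \<le> I * exp (- (u powr (1/2)))"
      by (intro mult_right_mono) auto
    finally show ?case using elim by simp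
  qed
  then show ?thesis by (simp add: eventually_at_top_linorder)
qed

definition PS :: "real \<Rightarrow> nat set" where
  "PS M = {q::nat. prime q \<and> M \<le> real q \<and> real q < 2*M}"

definition Phi :: "(real \<Rightarrow> real) \<Rightarrow> real \<Rightarrow> complex" where
  "Phi \<phi> = fourier (\<lambda>x. complex_of_real (\<phi> x))"

definition Sq where
  "Sq \<theta> \<psi>1 \<psi>2 \<epsilon> M q \<xi> = (\<Sum>r<q. exp (- (2 * pi * \<i> * complex_of_real (xqr \<theta> \<psi>1 \<psi>2 \<epsilon> M q r * \<xi>))))"

lemma finite_PS: "finite (PS M)"
proof (rule finite_subset)
  show "PS M \<subseteq> {..nat \<lceil>2*M\<rceil>}"
  proof
    fix x assume "x \<in> PS M"
    then have "real x < 2*M" unfolding PS_def by auto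
    then have "real x \<le> real_of_int \<lceil>2*M\<rceil>" by linarith
    then have "int x \<le> \<lceil>2*M\<rceil>" by linarith
    then show "x \<in> {..nat \<lceil>2*M\<rceil>}" by simp
  qed
qed simp

lemma G_formula:
  assumes c: "continuous_on UNIV \<phi>" and i: "integrable lborel \<phi>"
    and a: "\<And>q. cM \<epsilon> M * \<psi>2 q > 0"
  shows "fourier (\<lambda>y. complex_of_real (gM \<phi> \<theta> \<psi>1 \<psi>2 \<epsilon> M y)) \<xi> =
    (\<Sum>q\<in>PS M. Sq \<theta> \<psi>1 \<psi>2 \<epsilon> M q \<xi> * Phi \<phi> (cM \<epsilon> M * \<psi>2 q * \<xi>))"
  unfolding fourier_gM[OF c i a] PS_def Sq_def Phi_def by (simp add: sum_distrib_right)

lemma Sq0: "Sq \<theta> \<psi>1 \<psi>2 \<epsilon> M q 0 = of_nat q"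
  unfolding Sq_def by simp

lemma G0:
  assumes c: "continuous_on UNIV \<phi>" and i: "integrable lborel \<phi>"
    and a: "\<And>q. cM \<epsilon> M * \<psi>2 q > 0"
  shows "fourier (\<lambda>y. complex_of_real (gM \<phi> \<theta> \<psi>1 \<psi>2 \<epsilon> M y)) 0 =
    complex_of_real (real (\<Sum>q\<in>PS M. q) * integral\<^sup>L lborel \<phi>)"
  unfolding G_formula[OF c i a] Sq0 Phi_def by (simp add: Phi0 sum_distrib_right)

lemma G_bound:
  fixes s :: int
  assumes c: "continuous_on UNIV \<phi>" and i: "integrable lborel \<phi>"
    and a: "\<And>q. cM \<epsilon> M * \<psi>2 q > 0"
  shows "norm (fourier (\<lambda>y. complex_of_real (gM \<phi> \<theta> \<psi>1 \<psi>2 \<epsilon> M y)) (real_of_int s)) \<le>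
    (\<Sum>q\<in>PS M. if int q dvd s then real q * norm (Phi \<phi> (cM \<epsilon> M * \<psi>2 q * real_of_int s)) else 0)"
proof -
  have "norm (fourier (\<lambda>y. complex_of_real (gM \<phi> \<theta> \<psi>1 \<psi>2 \<epsilon> M y)) (real_of_int s)) \<le>
      (\<Sum>q\<in>PS M. norm (Sq \<theta> \<psi>1 \<psi>2 \<epsilon> M q (real_of_int s) * Phi \<phi> (cM \<epsilon> M * \<psi>2 q * real_of_int s)))"
    unfolding G_formula[OF c i a] by (rule norm_sum)
  also have "\<dots> \<le> (\<Sum>q\<in>PS M. if int q dvd s then real q * norm (Phi \<phi> (cM \<epsilon> M * \<psi>2 q * real_of_int s)) else 0)"
  proof (rule sum_mono)
    fix q assume "q \<in> PS M"
    then have q0: "q > 0" unfolding PS_def using prime_gt_0_nat by auto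
    show "norm (Sq \<theta> \<psi>1 \<psi>2 \<epsilon> M q (real_of_int s) * Phi \<phi> (cM \<epsilon> M * \<psi>2 q * real_of_int s)) \<le>
       (if int q dvd s then real q * norm (Phi \<phi> (cM \<epsilon> M * \<psi>2 q * real_of_int s)) else 0)"
    proof (cases "int q dvd s")
      case True
      have "norm (Sq \<theta> \<psi>1 \<psi>2 \<epsilon> M q (real_of_int s)) \<le> real q"
        unfolding Sq_def by (rule charsum_norm)
      then show ?thesis using True by (simp add: norm_mult mult_right_mono)
    next
      case False
      then have "Sq \<theta> \<psi>1 \<psi>2 \<epsilon> M q (real_of_int s) = 0"
        unfolding Sq_def by (rule charsum_zero[OF q0])
      then show ?thesis using False by simp
    qed
  qed
  finally show ?thesis .
qed

lemma G_zero:
  fixes s :: int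
  assumes c: "continuous_on UNIV \<phi>" and i: "integrable lborel \<phi>"
    and a: "\<And>q. cM \<epsilon> M * \<psi>2 q > 0"
    and nd: "\<And>q. q \<in> PS M \<Longrightarrow> \<not> int q dvd s"
  shows "fourier (\<lambda>y. complex_of_real (gM \<phi> \<theta> \<psi>1 \<psi>2 \<epsilon> M y)) (real_of_int s) = 0"
proof -
  have "Sq \<theta> \<psi>1 \<psi>2 \<epsilon> M q (real_of_int s) = 0" if "q \<in> PS M" for q
  proof -
    have q0: "q > 0" using that unfolding PS_def using prime_gt_0_nat by auto
    show ?thesis unfolding Sq_def by (rule charsum_zero[OF q0 nd[OF that]])
  qed
  then show ?thesis unfolding G_formula[OF c i a] by simp
qed

lemma card_PS:
  assumes n0: "\<forall>n\<ge>n0. real n / (4 * ln (2*real n)) + 2 \<le> real (card {p. prime p \<and> n < p \<and> p \<le> 2*n})"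
    and M: "M \<ge> real n0" "M \<ge> 1"
  shows "real (card (PS M)) \<ge> M / (4 * ln (4*M))"
proof -
  define n where "n = nat \<lceil>M\<rceil>"
  have rn: "real n = real_of_int \<lceil>M\<rceil>" unfolding n_def using M by simp
  have nM: "real n \<ge> M" "real n < M + 1" unfolding rn by linarith+
  have nn0: "n \<ge> n0" using nM M by linarith
  have n1: "n \<ge> 1" using nM M by linarith
  define T where "T = {p. prime p \<and> n < p \<and> p \<le> 2*n}"
  have finT: "finite T" unfolding T_def by simp
  have sub: "T - {2*n - 1, 2*n} \<subseteq> PS M"
  proof
    fix p assume p: "p \<in> T - {2*n - 1, 2*n}"
    then have "prime p" "n < p" "p \<le> 2*n - 2" unfolding T_def by auto
    moreover have "real p \<le> 2 * real n - 2" using \<open>p \<le> 2*n - 2\<close> n1 by linarith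
    ultimately show "p \<in> PS M" unfolding PS_def using nM by auto
  qed
  have "T \<subseteq> (T - {2*n - 1, 2*n}) \<union> {2*n - 1, 2*n}" by auto
  then have "card T \<le> card ((T - {2*n - 1, 2*n}) \<union> {2*n - 1, 2*n})"
    by (intro card_mono) (auto simp: finT)
  also have "\<dots> \<le> card (T - {2*n - 1, 2*n}) + card {2*n - 1, 2*n}" by (rule card_Un_le)
  also have "card {2*n - 1, 2*n} \<le> 2" by (simp add: card_insert_if)
  also have "card (T - {2*n - 1, 2*n}) \<le> card (PS M)" by (intro card_mono[OF finite_PS sub])
  finally have cT: "real (card T) \<le> real (card (PS M)) + 2" by linarith
  have l0: "ln (2 * real n) > 0" using n1 by simp
  have "M / (4 * ln (4*M)) \<le> real n / (4 * ln (2 * real n))"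
  proof (rule frac_le)
    show "0 \<le> real n" by simp
    show "M \<le> real n" using nM by simp
    show "0 < 4 * ln (2 * real n)" using l0 by simp
    show "4 * ln (2 * real n) \<le> 4 * ln (4 * M)" using nM M n1 by (simp add: ln_le_cancel_iff)
  qed
  also have "\<dots> \<le> real (card (PS M))" using n0 nn0 cT unfolding T_def by force
  finally show ?thesis .
qed



lemma card_D_bound:
  fixes s :: int and M \<epsilon> \<tau>2 :: real
  assumes M1: "M > 1" and \<tau>: "\<tau>2 \<ge> 2" and \<epsilon>: "0 < \<epsilon>" "\<epsilon> < 1"
    and s1: "M \<le> real_of_int \<bar>s\<bar>" and s2: "real_of_int \<bar>s\<bar> \<le> M powr (\<tau>2 * (1 + \<epsilon>/2))"
  shows "real (card {q\<in>PS M. int q dvd s}) \<le> 2 * \<tau>2"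
proof -
  define D where "D = {q\<in>PS M. int q dvd s}"
  have finD: "finite D" unfolding D_def using finite_PS by simp
  have s0: "s \<noteq> 0" using s1 M1 by auto
  have "(\<Prod>q\<in>D. q) dvd nat \<bar>s\<bar>"
  proof (rule prod_primes_dvd_nat[OF finD])
    fix p assume "p \<in> D"
    then have "prime p" "int p dvd s" unfolding D_def PS_def by auto
    moreover have "int p dvd int (nat \<bar>s\<bar>)" using \<open>int p dvd s\<close> by simp
    ultimately show "prime p \<and> p dvd nat \<bar>s\<bar>" by (simp only: of_nat_dvd_iff)
  qed
  then have "(\<Prod>q\<in>D. q) \<le> nat \<bar>s\<bar>" using s0 by (intro dvd_imp_le) auto
  then have "real (\<Prod>q\<in>D. q) \<le> real (nat \<bar>s\<bar>)" by (simp only: of_nat_le_iff)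
  then have P1: "(\<Prod>q\<in>D. real q) \<le> real_of_int \<bar>s\<bar>" by simp
  have "M ^ card D = (\<Prod>q\<in>D. M)" by simp
  also have "\<dots> \<le> (\<Prod>q\<in>D. real q)"
    by (intro prod_mono) (use M1 in \<open>auto simp: D_def PS_def\<close>)
  finally have "M ^ card D \<le> M powr (\<tau>2 * (1 + \<epsilon>/2))" using P1 s2 by linarith
  then have "M powr real (card D) \<le> M powr (\<tau>2 * (1 + \<epsilon>/2))"
    using M1 by (simp add: powr_realpow)
  then have "real (card D) \<le> \<tau>2 * (1 + \<epsilon>/2)" using M1 by simp
  also have "\<dots> \<le> \<tau>2 * 2" using \<tau> \<epsilon> by (intro mult_left_mono) auto
  finally show ?thesis unfolding D_def by simp
qed

lemma ln_le_powr: "x > 0 \<Longrightarrow> e > 0 \<Longrightarrow> ln x \<le> x powr e / e" for x e :: real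
proof -
  assume x: "x > 0" and e: "e > 0"
  have "ln (x powr e) \<le> x powr e - 1" by (rule ln_le_minus_one) (use x in simp)
  then have "e * ln x \<le> x powr e" using x by (simp add: ln_powr)
  then show ?thesis using e by (simp add: field_simps)
qed

lemma part3:
  fixes s :: int and M \<epsilon> \<tau>2 I :: real and f :: "nat \<Rightarrow> real" and g :: complex
  assumes M1: "M > 1" and \<tau>: "\<tau>2 \<ge> 2" and \<epsilon>: "0 < \<epsilon>" "\<epsilon> < 1" and I: "I > 0"
    and cP: "real (card (PS M)) \<ge> M / (4 * ln (4*M))"
    and gb: "norm g \<le> (\<Sum>q\<in>PS M. if int q dvd s then real q * f q else 0)"
    and fb: "\<And>q. f q \<le> I"
    and s1: "M \<le> real_of_int \<bar>s\<bar>" and s2: "real_of_int \<bar>s\<bar> \<le> M powr (\<tau>2 * (1 + \<epsilon>/2))"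
  shows "norm (g / complex_of_real (real (\<Sum>q\<in>PS M. q) * I)) \<le> 64*\<tau>2/\<epsilon> * M powr (-1+\<epsilon>)"
proof -
  define D where "D = {q\<in>PS M. int q dvd s}"
  have finD: "finite D" unfolding D_def using finite_PS by simp
  have cD: "real (card D) \<le> 2 * \<tau>2" unfolding D_def by (rule card_D_bound[OF M1 \<tau> \<epsilon> s1 s2])
  have l4: "ln (4*M) > 0" using M1 by simp
  have cP0: "real (card (PS M)) > 0" using cP M1 l4 by (smt (verit) divide_pos_pos)
  have "norm g \<le> (\<Sum>q\<in>PS M. if int q dvd s then real q * I else 0)"
    using gb fb by (smt (verit) sum_mono mult_left_mono of_nat_0_le_iff)
  also have "\<dots> = (\<Sum>q\<in>D. real q * I)" unfolding D_def
    by (simp add: sum.inter_filter[OF finite_PS])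
  also have "\<dots> \<le> (\<Sum>q\<in>D. 2 * M * I)"
    by (intro sum_mono mult_right_mono) (use I in \<open>auto simp: D_def PS_def\<close>)
  also have "\<dots> = real (card D) * (2 * M * I)" by simp
  also have "\<dots> \<le> (2 * \<tau>2) * (2 * M * I)" using cD M1 I by (intro mult_right_mono) auto
  finally have ng: "norm g \<le> 4 * \<tau>2 * M * I" by simp
  have "real (card (PS M)) * M = (\<Sum>q\<in>PS M. M)" by simp
  also have "\<dots> \<le> (\<Sum>q\<in>PS M. real q)" by (intro sum_mono) (auto simp: PS_def)
  finally have NP: "real (card (PS M)) * M \<le> real (\<Sum>q\<in>PS M. q)" by simp
  have N0: "real (\<Sum>q\<in>PS M. q) > 0" using NP cP0 M1 by (smt (verit) mult_pos_pos)
  have "norm (g / complex_of_real (real (\<Sum>q\<in>PS M. q) * I)) = norm g / (real (\<Sum>q\<in>PS M. q) * I)"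
  proof -
    have "norm (complex_of_real (real (\<Sum>q\<in>PS M. q) * I)) = real (\<Sum>q\<in>PS M. q) * I"
      by (simp only: norm_of_real) (use N0 I in simp)
    then show ?thesis by (simp only: norm_divide)
  qed
  also have "\<dots> \<le> (4 * \<tau>2 * M * I) / (real (card (PS M)) * M * I)"
    using ng NP N0 I cP0 M1 \<tau> by (intro frac_le mult_right_mono) auto
  also have "\<dots> = 4 * \<tau>2 / real (card (PS M))" using I M1 by (simp add: field_simps)
  also have "\<dots> \<le> 4 * \<tau>2 / (M / (4 * ln (4*M)))"
    using cP cP0 \<tau> M1 l4 by (intro divide_left_mono) auto
  also have "\<dots> = 16 * \<tau>2 * ln (4*M) / M" using M1 l4 by (simp add: field_simps)
  also have "\<dots> \<le> 16 * \<tau>2 * ((4*M) powr \<epsilon> / \<epsilon>) / M"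
    using ln_le_powr[of "4*M" \<epsilon>] M1 \<epsilon> \<tau> by (intro divide_right_mono mult_left_mono) auto
  also have "(4*M) powr \<epsilon> = 4 powr \<epsilon> * M powr \<epsilon>" using M1 by (simp add: powr_mult)
  also have "4 powr \<epsilon> \<le> 4"
  proof -
    have "(4::real) powr \<epsilon> \<le> 4 powr 1" using \<epsilon> by (intro powr_mono) auto
    then show ?thesis by simp
  qed
  then have "16 * \<tau>2 * (4 powr \<epsilon> * M powr \<epsilon> / \<epsilon>) / M \<le> 16 * \<tau>2 * (4 * M powr \<epsilon> / \<epsilon>) / M"
    using \<epsilon> \<tau> M1 by (intro divide_right_mono mult_left_mono mult_right_mono) auto
  also have "16 * \<tau>2 * (4 * M powr \<epsilon> / \<epsilon>) / M = 64*\<tau>2/\<epsilon> * (M powr \<epsilon> / M)" by (simp add: field_simps)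
  also have "M powr \<epsilon> / M = M powr (-1+\<epsilon>)"
  proof -
    have "M powr (-1+\<epsilon>) = M powr (\<epsilon> - 1)" by (simp add: algebra_simps)
    also have "\<dots> = M powr \<epsilon> / M powr 1" by (rule powr_diff)
    also have "M powr 1 = M" using M1 by simp
    finally show ?thesis by simp
  qed
  finally show ?thesis .
qed

lemma part4:
  fixes s :: int and M I E :: real and f :: "nat \<Rightarrow> real" and g :: complex
  assumes I: "I > 0" and ne: "PS M \<noteq> {}"
    and gb: "norm g \<le> (\<Sum>q\<in>PS M. if int q dvd s then real q * f q else 0)"
    and fb: "\<And>q. q \<in> PS M \<Longrightarrow> int q dvd s \<Longrightarrow> f q \<le> I * E" and E: "E \<ge> 0"
  shows "norm (g / complex_of_real (real (\<Sum>q\<in>PS M. q) * I)) \<le> E"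
proof -
  have "real (\<Sum>q\<in>PS M. q) > 0"
  proof -
    obtain q where q: "q \<in> PS M" using ne by blast
    then have "q > 0" unfolding PS_def using prime_gt_0_nat by auto
    then have "0 < real q" by simp
    also have "real q \<le> real (\<Sum>q\<in>PS M. q)" using q finite_PS by (simp only: of_nat_le_iff) (rule member_le_sum, auto)
    finally show ?thesis .
  qed
  note N0 = this
  have "norm g \<le> (\<Sum>q\<in>PS M. real q * (I * E))"
  proof -
    have "(\<Sum>q\<in>PS M. if int q dvd s then real q * f q else 0) \<le> (\<Sum>q\<in>PS M. real q * (I * E))"
    proof (rule sum_mono)
      fix q assume q: "q \<in> PS M"
      show "(if int q dvd s then real q * f q else 0) \<le> real q * (I * E)"
        using fb[OF q] I E by (auto intro: mult_left_mono)
    qed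
    then show ?thesis using gb by linarith
  qed
  also have "\<dots> = real (\<Sum>q\<in>PS M. q) * I * E" by (simp add: sum_distrib_right mult.assoc)
  finally have ng: "norm g \<le> real (\<Sum>q\<in>PS M. q) * I * E" .
  have "norm (complex_of_real (real (\<Sum>q\<in>PS M. q) * I)) = real (\<Sum>q\<in>PS M. q) * I"
    by (simp only: norm_of_real) (use N0 I in simp)
  then have "norm (g / complex_of_real (real (\<Sum>q\<in>PS M. q) * I)) = norm g / (real (\<Sum>q\<in>PS M. q) * I)"
    by (simp only: norm_divide)
  also have "\<dots> \<le> E" using ng N0 I by (simp add: divide_le_eq mult.commute mult.left_commute)
  finally show ?thesis .
qed

lemma decay_q:
  fixes s :: int and q :: nat and M \<epsilon> \<tau>2 I C R K U0 :: real and \<psi>2 :: "nat \<Rightarrow> real"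
  assumes M1: "M > 1" and \<tau>: "\<tau>2 \<ge> 2" and \<epsilon>: "0 < \<epsilon>" "\<epsilon> < 1"
    and q: "q \<in> PS M"
    and \<psi>2pos: "\<And>q. \<psi>2 q > 0" and anti: "antimono \<psi>2"
    and m: "ln (\<psi>2 (nat \<lceil>2*M\<rceil>)) / ln (real (nat \<lceil>2*M\<rceil>)) > - \<tau>2 - \<epsilon>/100"
    and dec: "\<forall>\<xi>. \<bar>\<xi>\<bar> \<ge> R \<longrightarrow> norm (Phi \<phi> \<xi>) \<le> C * exp (- (\<bar>\<xi>\<bar> powr (3/4)))"
    and U0: "\<forall>u\<ge>U0. R \<le> K * u powr (49/50) \<and>
           C * exp (- ((K * u powr (49/50)) powr (3/4))) \<le> I * exp (- (u powr (1/2)))"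
    and K: "K = 3 powr (- \<tau>2 - \<epsilon>/100)"
    and MU: "M powr \<epsilon> \<ge> U0"
    and s: "real_of_int \<bar>s\<bar> \<ge> M powr (\<tau>2 * (1 + \<epsilon>/2))"
  shows "norm (Phi \<phi> (cM \<epsilon> M * \<psi>2 q * real_of_int s)) \<le> I * exp (- (\<bar>real_of_int s / M powr \<tau>2\<bar> powr (1/2)))"
proof -
  define \<delta> where "\<delta> = \<epsilon>/100"
  define m where "m = nat \<lceil>2*M\<rceil>"
  have rm: "real m = real_of_int \<lceil>2*M\<rceil>" unfolding m_def using M1 by simp
  have m1: "real m \<ge> 2*M" "real m \<le> 3*M" using M1 unfolding rm by linarith+
  have m2: "real m > 1" using m1 M1 by linarith
  have qm: "q \<le> m" using q m1 unfolding PS_def by auto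
  have psi_q: "\<psi>2 m \<le> \<psi>2 q" using anti qm by (rule antimonoD)
  have lm: "ln (real m) > 0" using m2 by simp
  have "ln (\<psi>2 m) > (- \<tau>2 - \<delta>) * ln (real m)"
    using m lm unfolding m_def[symmetric] \<delta>_def by (simp add: less_divide_eq)
  then have "exp ((- \<tau>2 - \<delta>) * ln (real m)) < exp (ln (\<psi>2 m))" by simp
  then have psi_m: "real m powr (- \<tau>2 - \<delta>) < \<psi>2 m"
    using \<psi>2pos[of m] m2 by (simp add: powr_def)
  have "(3*M) powr (- \<tau>2 - \<delta>) \<le> real m powr (- \<tau>2 - \<delta>)"
    using m1 m2 \<tau> \<epsilon> unfolding \<delta>_def by (intro powr_mono2') auto
  also have "(3*M) powr (- \<tau>2 - \<delta>) = K * M powr (- \<tau>2 - \<delta>)"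
    unfolding K \<delta>_def using M1 by (simp add: powr_mult)
  finally have psiK: "K * M powr (- \<tau>2 - \<delta>) \<le> \<psi>2 q" using psi_m psi_q by linarith
  have K0: "K > 0" unfolding K by simp
  define u where "u = \<bar>real_of_int s / M powr \<tau>2\<bar>"
  have Mt: "M powr \<tau>2 > 0" using M1 by simp
  have u_eq: "u = real_of_int \<bar>s\<bar> / M powr \<tau>2" unfolding u_def using Mt by (simp add: abs_divide)
  have s_eq: "real_of_int \<bar>s\<bar> = u * M powr \<tau>2" unfolding u_eq using Mt by simp
  have "M powr (\<tau>2 * (1 + \<epsilon>/2)) = M powr \<tau>2 * M powr (\<tau>2 * \<epsilon> / 2)"
    by (simp add: powr_add[symmetric] algebra_simps)
  then have "M powr (\<tau>2 * \<epsilon> / 2) \<le> u" using s Mt unfolding u_eq by (simp add: le_divide_eq mult.commute)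
  moreover have "M powr \<epsilon> \<le> M powr (\<tau>2 * \<epsilon> / 2)" using M1 \<tau> \<epsilon> by (intro powr_mono) auto
  ultimately have uM: "M powr \<epsilon> \<le> u" by linarith
  have Me: "M powr \<epsilon> > 0" using M1 by simp
  have u0: "u > 0" using uM Me by linarith
  have cM_eq: "cM \<epsilon> M = M powr (- \<delta>)" unfolding cM_def \<delta>_def by simp
  have "\<bar>cM \<epsilon> M * \<psi>2 q * real_of_int s\<bar> = M powr (- \<delta>) * \<psi>2 q * (u * M powr \<tau>2)"
    unfolding cM_eq s_eq[symmetric] using \<psi>2pos[of q] by (simp add: abs_mult)
  also have "\<dots> \<ge> M powr (- \<delta>) * (K * M powr (- \<tau>2 - \<delta>)) * (u * M powr \<tau>2)"
    using psiK u0 Mt by (intro mult_right_mono mult_left_mono) auto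
  finally have xi1: "\<bar>cM \<epsilon> M * \<psi>2 q * real_of_int s\<bar> \<ge> K * u * (M powr (- \<delta>) * M powr (- \<tau>2 - \<delta>) * M powr \<tau>2)"
    by (simp add: algebra_simps)
  have "M powr (- \<delta>) * M powr (- \<tau>2 - \<delta>) * M powr \<tau>2 = M powr (- \<delta> + (- \<tau>2 - \<delta>) + \<tau>2)"
    by (simp only: powr_add)
  also have "- \<delta> + (- \<tau>2 - \<delta>) + \<tau>2 = \<epsilon> * (-1/50)" unfolding \<delta>_def by simp
  also have "M powr (\<epsilon> * (-1/50)) = (M powr \<epsilon>) powr (-1/50)" by (simp add: powr_powr)
  also have "\<dots> \<ge> u powr (-1/50)" using uM Me by (intro powr_mono2') auto
  finally have "M powr (- \<delta>) * M powr (- \<tau>2 - \<delta>) * M powr \<tau>2 \<ge> u powr (-1/50)" .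
  then have "K * u * (M powr (- \<delta>) * M powr (- \<tau>2 - \<delta>) * M powr \<tau>2) \<ge> K * u * u powr (-1/50)"
    using K0 u0 by (intro mult_left_mono) auto
  also have "K * u * u powr (-1/50) = K * u powr (49/50)"
  proof -
    have "u * u powr (-1/50) = u powr 1 * u powr (-1/50)" using u0 by simp
    also have "\<dots> = u powr (1 + (-1/50))" by (simp only: powr_add)
    also have "\<dots> = u powr (49/50)" by simp
    finally show ?thesis by simp
  qed
  finally have xi: "\<bar>cM \<epsilon> M * \<psi>2 q * real_of_int s\<bar> \<ge> K * u powr (49/50)" using xi1 by linarith
  have uU: "u \<ge> U0" using uM MU by linarith
  have R: "R \<le> K * u powr (49/50)" and fin: "C * exp (- ((K * u powr (49/50)) powr (3/4))) \<le> I * exp (- (u powr (1/2)))"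
    using U0 uU by auto
  let ?\<xi> = "cM \<epsilon> M * \<psi>2 q * real_of_int s"
  have nb: "norm (Phi \<phi> ?\<xi>) \<le> C * exp (- (\<bar>?\<xi>\<bar> powr (3/4)))" using dec R xi by auto
  have C0: "C \<ge> 0"
  proof (rule ccontr)
    assume "\<not> C \<ge> 0"
    then have "C * exp (- (\<bar>?\<xi>\<bar> powr (3/4))) < 0" by (simp add: mult_neg_pos)
    then show False using nb norm_ge_zero[of "Phi \<phi> ?\<xi>"] by linarith
  qed
  have "(K * u powr (49/50)) powr (3/4) \<le> \<bar>?\<xi>\<bar> powr (3/4)"
    using xi K0 u0 by (intro powr_mono2) auto
  then have "exp (- (\<bar>?\<xi>\<bar> powr (3/4))) \<le> exp (- ((K * u powr (49/50)) powr (3/4)))" by simp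
  then have "C * exp (- (\<bar>?\<xi>\<bar> powr (3/4))) \<le> C * exp (- ((K * u powr (49/50)) powr (3/4)))"
    using C0 by (rule mult_left_mono)
  then show ?thesis using nb fin unfolding u_def by linarith
qed

theorem lemma6:
  fixes \<theta> \<epsilon> \<tau>2 :: real and \<psi>1 \<psi>2 :: "nat \<Rightarrow> real" and \<phi> :: "real \<Rightarrow> real"
  assumes "0 \<le> \<theta>" and "\<theta> < 1"
    and "\<And>q. \<psi>1 q > 0" and "\<And>q. \<psi>2 q > 0"
    and "\<And>q. \<psi>2 q \<le> \<psi>1 q"
    and "antimono \<psi>2"
    and "((\<lambda>q. ln (\<psi>2 q) / ln (real q)) \<longlongrightarrow> - \<tau>2) at_top"
    and "\<tau>2 \<ge> 2"
    and "0 < \<epsilon>" and "\<epsilon> < 1"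
    and "smooth_fun \<phi>"
    and "\<And>x. \<phi> x \<ge> 0"
    and "\<exists>x. \<phi> x \<noteq> 0"
    and "\<And>x. \<bar>x\<bar> > 1/2 \<Longrightarrow> \<phi> x = 0"
    and "\<exists>C R. \<forall>\<xi>. \<bar>\<xi>\<bar> \<ge> R \<longrightarrow>
           norm (fourier (\<lambda>x. complex_of_real (\<phi> x)) \<xi>) \<le> C * exp (- (\<bar>\<xi>\<bar> powr (3/4)))"
  shows "\<exists>M0 C\<^sub>\<epsilon>. \<forall>M::real. M > 1 \<and> M \<ge> M0 \<longrightarrow> (\<forall>s::int.
     let F = fourier (fM \<phi> \<theta> \<psi>1 \<psi>2 \<epsilon> M) (real_of_int s) in
       (s = 0 \<longrightarrow> F = 1) \<and>
       (1 \<le> \<bar>s\<bar> \<and> real_of_int \<bar>s\<bar> < M \<longrightarrow> F = 0) \<and>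
       (M \<le> real_of_int \<bar>s\<bar> \<and> real_of_int \<bar>s\<bar> \<le> M powr (\<tau>2 * (1 + \<epsilon> / 2)) \<longrightarrow>
          norm F \<le> C\<^sub>\<epsilon> * M powr (-1 + \<epsilon>)) \<and>
       (real_of_int \<bar>s\<bar> \<ge> M powr (\<tau>2 * (1 + \<epsilon> / 2)) \<longrightarrow>
          norm F \<le> exp (- (\<bar>real_of_int s / M powr \<tau>2\<bar> powr (1/2)))))"
proof -
  have c: "continuous_on UNIV \<phi>" by (rule smooth_cont[OF assms(11)])
  have i: "integrable lborel \<phi>" by (rule supp_integrable[OF c assms(14)])
  define I where "I = integral\<^sup>L lborel \<phi>"
  have I0: "I > 0" unfolding I_def by (rule pos_integral[OF c i assms(12) assms(13)])
  obtain C R where dec0: "\<forall>\<xi>. \<bar>\<xi>\<bar> \<ge> R \<longrightarrow>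
           norm (fourier (\<lambda>x. complex_of_real (\<phi> x)) \<xi>) \<le> C * exp (- (\<bar>\<xi>\<bar> powr (3/4)))"
    using assms(15) by blast
  have dec: "\<forall>\<xi>. \<bar>\<xi>\<bar> \<ge> R \<longrightarrow> norm (Phi \<phi> \<xi>) \<le> C * exp (- (\<bar>\<xi>\<bar> powr (3/4)))"
    using dec0 unfolding Phi_def .
  have fbd: "norm (Phi \<phi> \<xi>) \<le> I" for \<xi>
    unfolding Phi_def I_def by (rule Phi_bound[OF assms(12)])
  define K where "K = 3 powr (- \<tau>2 - \<epsilon>/100)"
  have K0: "K > 0" unfolding K_def by simp
  obtain U0 where U0: "\<forall>u\<ge>U0. R \<le> K * u powr (49/50) \<and>
           C * exp (- ((K * u powr (49/50)) powr (3/4))) \<le> I * exp (- (u powr (1/2)))"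
    using asymp_aux[OF K0 I0, of R C] by blast
  have "eventually (\<lambda>n. ln (\<psi>2 n) / ln (real n) > - \<tau>2 - \<epsilon>/100) at_top"
    using assms(7) assms(9) by (intro order_tendstoD(1)) auto
  then obtain N1 where N1: "\<And>n. n \<ge> N1 \<Longrightarrow> ln (\<psi>2 n) / ln (real n) > - \<tau>2 - \<epsilon>/100"
    by (auto simp: eventually_at_top_linorder)
  obtain n0 where n0: "\<forall>n\<ge>n0. real n / (4 * ln (2*real n)) + 2 \<le> real (card {p. prime p \<and> n < p \<and> p \<le> 2*n})"
    using primes_many by blast
  define M0 where "M0 = max (real n0 + real N1) ((max U0 1) powr (1/\<epsilon>))"
  show ?thesis
  proof (intro exI allI impI)
    fix M :: real and s :: int
    assume M: "M > 1 \<and> M \<ge> M0"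
    then have M1: "M > 1" and MM0: "M \<ge> M0" by auto
    have a: "cM \<epsilon> M * \<psi>2 q > 0" for q
      unfolding cM_def using M1 assms(4)[of q] by simp
    have cP: "real (card (PS M)) \<ge> M / (4 * ln (4*M))"
      by (rule card_PS[OF n0]) (use MM0 M1 in \<open>auto simp: M0_def\<close>)
    have cP0: "M / (4 * ln (4*M)) > 0" using M1 by simp
    have ne: "PS M \<noteq> {}"
    proof
      assume "PS M = {}"
      then show False using cP cP0 by simp
    qed
    have N1M: "nat \<lceil>2*M\<rceil> \<ge> N1"
    proof -
      have "real N1 \<le> M" using MM0 unfolding M0_def by linarith
      then have "real N1 \<le> real_of_int \<lceil>2*M\<rceil>" using M1 by linarith
      then show ?thesis by linarith
    qed
    have mcond: "ln (\<psi>2 (nat \<lceil>2*M\<rceil>)) / ln (real (nat \<lceil>2*M\<rceil>)) > - \<tau>2 - \<epsilon>/100"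
      by (rule N1[OF N1M])
    have MU: "M powr \<epsilon> \<ge> U0"
    proof -
      have "(max U0 1) powr (1/\<epsilon>) \<le> M" using MM0 unfolding M0_def by linarith
      then have "((max U0 1) powr (1/\<epsilon>)) powr \<epsilon> \<le> M powr \<epsilon>"
        using assms(9) by (intro powr_mono2) auto
      also have "((max U0 1) powr (1/\<epsilon>)) powr \<epsilon> = max U0 1"
        using assms(9) by (simp add: powr_powr)
      finally show ?thesis by linarith
    qed
    define G where "G \<xi> = fourier (\<lambda>y. complex_of_real (gM \<phi> \<theta> \<psi>1 \<psi>2 \<epsilon> M y)) \<xi>" for \<xi>
    have G0e: "G 0 = complex_of_real (real (\<Sum>q\<in>PS M. q) * I)"
      unfolding G_def I_def by (rule G0[OF c i a])
    have Npos: "real (\<Sum>q\<in>PS M. q) > 0"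
    proof -
      obtain q where q: "q \<in> PS M" using ne by blast
      then have "q > 0" unfolding PS_def using prime_gt_0_nat by auto
      then have "0 < real q" by simp
      also have "real q \<le> real (\<Sum>q\<in>PS M. q)" using q finite_PS by (simp only: of_nat_le_iff) (rule member_le_sum, auto)
      finally show ?thesis .
    qed
    have G0nz: "G 0 \<noteq> 0" unfolding G0e of_real_eq_0_iff using Npos I0 by (simp del: of_nat_sum)
    have Fe: "fourier (fM \<phi> \<theta> \<psi>1 \<psi>2 \<epsilon> M) (real_of_int s) = G (real_of_int s) / G 0"
      unfolding G_def by (rule fourier_fM)
    have gb: "norm (G (real_of_int s)) \<le>
      (\<Sum>q\<in>PS M. if int q dvd s then real q * norm (Phi \<phi> (cM \<epsilon> M * \<psi>2 q * real_of_int s)) else 0)"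
      unfolding G_def by (rule G_bound[OF c i a])
    show "let F = fourier (fM \<phi> \<theta> \<psi>1 \<psi>2 \<epsilon> M) (real_of_int s) in
       (s = 0 \<longrightarrow> F = 1) \<and>
       (1 \<le> \<bar>s\<bar> \<and> real_of_int \<bar>s\<bar> < M \<longrightarrow> F = 0) \<and>
       (M \<le> real_of_int \<bar>s\<bar> \<and> real_of_int \<bar>s\<bar> \<le> M powr (\<tau>2 * (1 + \<epsilon> / 2)) \<longrightarrow>
          norm F \<le> 64*\<tau>2/\<epsilon> * M powr (-1 + \<epsilon>)) \<and>
       (real_of_int \<bar>s\<bar> \<ge> M powr (\<tau>2 * (1 + \<epsilon> / 2)) \<longrightarrow>
          norm F \<le> exp (- (\<bar>real_of_int s / M powr \<tau>2\<bar> powr (1/2))))"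
      unfolding Let_def Fe
    proof (intro conjI impI)
      assume "s = 0"
      then show "G (real_of_int s) / G 0 = 1" using G0nz by simp
    next
      assume h: "1 \<le> \<bar>s\<bar> \<and> real_of_int \<bar>s\<bar> < M"
      have "G (real_of_int s) = 0" unfolding G_def
      proof (rule G_zero[OF c i a])
        fix q assume q: "q \<in> PS M"
        show "\<not> int q dvd s"
        proof
          assume d: "int q dvd s"
          have "s \<noteq> 0" using h by auto
          then have "\<bar>int q\<bar> \<le> \<bar>s\<bar>" using d by (rule dvd_imp_le_int)
          then have "real q \<le> real_of_int \<bar>s\<bar>" by linarith
          then show False using q h unfolding PS_def by auto
        qed
      qed
      then show "G (real_of_int s) / G 0 = 0" by simp
    next
      assume h: "M \<le> real_of_int \<bar>s\<bar> \<and> real_of_int \<bar>s\<bar> \<le> M powr (\<tau>2 * (1 + \<epsilon> / 2))"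
      show "norm (G (real_of_int s) / G 0) \<le> 64*\<tau>2/\<epsilon> * M powr (-1 + \<epsilon>)"
        unfolding G0e
        by (rule part3[OF M1 assms(8) assms(9) assms(10) I0 cP gb fbd]) (use h in auto)
    next
      assume h: "real_of_int \<bar>s\<bar> \<ge> M powr (\<tau>2 * (1 + \<epsilon> / 2))"
      show "norm (G (real_of_int s) / G 0) \<le> exp (- (\<bar>real_of_int s / M powr \<tau>2\<bar> powr (1/2)))"
        unfolding G0e
      proof (rule part4[OF I0 ne gb])
        fix q assume q: "q \<in> PS M" and "int q dvd s"
        show "norm (Phi \<phi> (cM \<epsilon> M * \<psi>2 q * real_of_int s)) \<le> I * exp (- (\<bar>real_of_int s / M powr \<tau>2\<bar> powr (1/2)))"
          by (rule decay_q[OF M1 assms(8) assms(9) assms(10) q assms(4) assms(6) mcond dec U0 K_def MU h])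
      qed simp
    qed
  qed
qed


end
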